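(* Let $x$ be a variable over a finite abelian group $H$. Then there is a variable gadget for $x$ with at most $4|H|\log_2^2|H|$ auxiliary vertices, at most $7|H|\log_2^2|H|$ edges, and maximum clique size at most $\min\{4,|H|\}$.
   Context: For a variable $x$ over $H$, let $V_x=\{x\mapsto a: a\in H\}$ be a set of $|H|$ vertices. A variable gadget for $x$ is a graph $G=(V_x\cup V_A,E)$ (the vertices of $V_A$ are called auxiliary) such that: (Completeness) for each $a\in H$, $G$ has an automorphism $f_a$ with $f_a(x\mapsto b)=x\mapsto(a+b)$ for all $b\in H$; (Soundness) for every automorphism $f$ of $G$ there exists $a\in H$ with $f(x\mapsto b)=x\mapsto(a+b)$ for all $b\in H$. *)

theory Defs
  imports Complex_Main
begin

text \<open>Vertices of a variable gadget for a variable x over a group 'a: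
  Inl b stands for the vertex (x \<mapsto> b); Inr n are auxiliary vertices.\<close>

type_synonym 'a vertex = "'a + nat"

definition var_vertices :: "'a vertex set" where
  "var_vertices = range Inl"

definition simple_graph_on :: "'v set \<Rightarrow> 'v set set \<Rightarrow> bool" where
  "simple_graph_on V E \<longleftrightarrow>
     (\<forall>e\<in>E. \<exists>u v. e = {u, v} \<and> u \<noteq> v \<and> u \<in> V \<and> v \<in> V)"

definition graph_automorphism :: "'v set \<Rightarrow> 'v set set \<Rightarrow> ('v \<Rightarrow> 'v) \<Rightarrow> bool" where
  "graph_automorphism V E f \<longleftrightarrow>
     bij_betw f V V \<and>
     (\<forall>u\<in>V. \<forall>v\<in>V. {u, v} \<in> E \<longleftrightarrow> {f u, f v} \<in> E)"

definition is_clique :: "'v set \<Rightarrow> 'v set set \<Rightarrow> 'v set \<Rightarrow> bool" where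
  "is_clique V E C \<longleftrightarrow> C \<subseteq> V \<and> (\<forall>u\<in>C. \<forall>v\<in>C. u \<noteq> v \<longrightarrow> {u, v} \<in> E)"

definition variable_gadget :: "nat set \<Rightarrow> ('a::ab_group_add) vertex set set \<Rightarrow> bool" where
  "variable_gadget A E \<longleftrightarrow>
     (let V = var_vertices \<union> Inr ` A in
       finite A \<and> simple_graph_on V E \<and>
       (\<forall>a. \<exists>f. graph_automorphism V E f \<and> (\<forall>b. f (Inl b) = Inl (a + b))) \<and>
       (\<forall>f. graph_automorphism V E f \<longrightarrow> (\<exists>a. \<forall>b. f (Inl b) = Inl (a + b))))"

end

theory Submission
  imports Defs "HOL-Library.Countable"
begin


inductive_set gspan :: "'a::ab_group_add set \<Rightarrow> 'a set" for S where
  gz: "0 \<in> gspan S"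
| ga: "x \<in> gspan S \<Longrightarrow> g \<in> S \<Longrightarrow> x + g \<in> gspan S"
| gd: "x \<in> gspan S \<Longrightarrow> g \<in> S \<Longrightarrow> x - g \<in> gspan S"

lemma gspan_closed:
  assumes "y \<in> gspan S" "x \<in> gspan S"
  shows "x + y \<in> gspan S \<and> x - y \<in> gspan S"
  using assms(1)
proof induction
  case gz then show ?case using assms(2) by simp
next
  case (ga y g)
  have "x + (y + g) = (x + y) + g" "x - (y + g) = (x - y) - g" by (simp_all add: algebra_simps)
  then show ?case using ga gspan.ga gspan.gd by metis
next
  case (gd y g)
  have "x + (y - g) = (x + y) - g" "x - (y - g) = (x - y) + g" by (simp_all add: algebra_simps)
  then show ?case using gd gspan.ga gspan.gd by metis
qed

lemma gspan_mono: "S \<subseteq> T \<Longrightarrow> gspan S \<subseteq> gspan T"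
proof
  fix x assume "S \<subseteq> T" "x \<in> gspan S"
  from \<open>x \<in> gspan S\<close> show "x \<in> gspan T"
    by (induction rule: gspan.induct) (use \<open>S \<subseteq> T\<close> in \<open>auto intro: gspan.intros\<close>)
qed

lemma gspan_gen: "g \<in> S \<Longrightarrow> g \<in> gspan S"
  using gspan.ga[OF gspan.gz] by fastforce

lemma gspan_empty: "gspan {} = {0}"
proof -
  have "x \<in> gspan {} \<Longrightarrow> x = 0" for x :: 'a
    by (induction rule: gspan.induct) auto
  then show ?thesis using gspan.gz by blast
qed

lemma gspan_double:
  fixes S :: "'a::ab_group_add set"
  assumes fin: "finite (UNIV::'a set)" and g: "g \<notin> gspan S"
  shows "2 * card (gspan S) \<le> card (gspan (insert g S))"
proof -
  have sub: "gspan S \<union> ((+) g ` gspan S) \<subseteq> gspan (insert g S)"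
  proof -
    have "gspan S \<subseteq> gspan (insert g S)" by (rule gspan_mono) auto
    moreover have "g + x \<in> gspan (insert g S)" if "x \<in> gspan S" for x
    proof -
      have "x \<in> gspan (insert g S)" using that gspan_mono[of S "insert g S"] by auto
      moreover have "g \<in> gspan (insert g S)" by (rule gspan_gen) simp
      ultimately show ?thesis using gspan_closed[of x "insert g S" g] by (simp add: add.commute)
    qed
    ultimately show ?thesis by blast
  qed
  have disj: "gspan S \<inter> ((+) g ` gspan S) = {}"
  proof (rule ccontr)
    assume "gspan S \<inter> ((+) g ` gspan S) \<noteq> {}"
    then obtain x where x: "x \<in> gspan S" "g + x \<in> gspan S" by auto
    then have "(g + x) - x \<in> gspan S" using gspan_closed by blast
    then show False using g by simp
  qed
  have "card ((+) g ` gspan S) = card (gspan S)"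
    by (rule card_image) (simp add: inj_on_def)
  then have "card (gspan S \<union> ((+) g ` gspan S)) = 2 * card (gspan S)"
    using disj fin card_Un_disjoint[of "gspan S" "(+) g ` gspan S"] finite_subset[OF subset_UNIV fin]
    by simp
  then show ?thesis using card_mono[OF finite_subset[OF subset_UNIV fin] sub] by simp
qed

lemma gen_exists_aux:
  fixes gs :: "'a::ab_group_add list"
  assumes fin: "finite (UNIV::'a set)"
  shows "2 ^ length gs \<le> card (gspan (set gs)) \<Longrightarrow> 0 \<notin> set gs \<Longrightarrow>
    \<exists>gs'::'a list. gspan (set gs') = UNIV \<and> 2 ^ length gs' \<le> card (UNIV::'a set) \<and> 0 \<notin> set gs'"
proof (induction "card (UNIV::'a set) - card (gspan (set gs))" arbitrary: gs rule: less_induct)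
  case less
  show ?case
  proof (cases "gspan (set gs) = UNIV")
    case True
    have "gspan (set gs) = UNIV \<and> 2 ^ length gs \<le> card (UNIV::'a set) \<and> 0 \<notin> set gs"
      using True less.prems by simp
    then show ?thesis by blast
  next
    case False
    then obtain g where g: "g \<notin> gspan (set gs)" by auto
    have g0: "g \<noteq> 0" using g gspan.gz by metis
    have d: "2 * card (gspan (set gs)) \<le> card (gspan (set (g # gs)))"
      using gspan_double[OF fin g] by simp
    have le: "card (gspan (set (g # gs))) \<le> card (UNIV::'a set)"
      by (rule card_mono[OF fin]) simp
    have pos: "0 < card (gspan (set gs))"
      using gspan.gz fin by (metis card_gt_0_iff empty_iff finite_subset subset_UNIV)
    show ?thesis
    proof (rule less.hyps[of "g # gs"])
      show "card (UNIV::'a set) - card (gspan (set (g # gs))) < card (UNIV::'a set) - card (gspan (set gs))"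
        using d le pos by linarith
      show "2 ^ length (g # gs) \<le> card (gspan (set (g # gs)))" using less.prems d by simp
      show "0 \<notin> set (g # gs)" using less.prems g0 by simp
    qed
  qed
qed

lemma gen_exists:
  assumes fin: "finite (UNIV::'a::ab_group_add set)"
  shows "\<exists>gs::'a list. gspan (set gs) = UNIV \<and> 2 ^ length gs \<le> card (UNIV::'a set) \<and> 0 \<notin> set gs"
  using gen_exists_aux[OF fin, of "[]"] by (simp add: gspan_empty)



definition nbr :: "'v set \<Rightarrow> 'v set set \<Rightarrow> 'v \<Rightarrow> 'v set" where
  "nbr V E v = {u\<in>V. {v, u} \<in> E}"

lemma aut_nbr:
  assumes "graph_automorphism V E f" "v \<in> V"
  shows "f ` nbr V E v = nbr V E (f v)"
proof
  have b: "bij_betw f V V" and ad: "\<And>u v. u\<in>V \<Longrightarrow> v\<in>V \<Longrightarrow> {u, v} \<in> E \<longleftrightarrow> {f u, f v} \<in> E"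
    using assms(1) unfolding graph_automorphism_def by auto
  show "f ` nbr V E v \<subseteq> nbr V E (f v)"
    using b ad assms(2) unfolding nbr_def bij_betw_def by auto
  show "nbr V E (f v) \<subseteq> f ` nbr V E v"
  proof
    fix w assume "w \<in> nbr V E (f v)"
    then have w: "w \<in> V" "{f v, w} \<in> E" unfolding nbr_def by auto
    then obtain u where u: "u \<in> V" "w = f u" using b unfolding bij_betw_def by auto
    then have "{v, u} \<in> E" using ad[OF assms(2) u(1)] w by simp
    then show "w \<in> f ` nbr V E v" using u unfolding nbr_def by auto
  qed
qed

lemma aut_deg:
  assumes "graph_automorphism V E f" "v \<in> V"
  shows "card (nbr V E (f v)) = card (nbr V E v)"
proof -
  have "inj_on f V" using assms(1) unfolding graph_automorphism_def bij_betw_def by blast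
  moreover have "nbr V E v \<subseteq> V" by (auto simp: nbr_def)
  ultimately have "inj_on f (nbr V E v)" by (rule inj_on_subset)
  then show ?thesis using aut_nbr[OF assms] card_image by metis
qed

lemma aut_in:
  assumes "graph_automorphism V E f" "v \<in> V" shows "f v \<in> V"
  using assms unfolding graph_automorphism_def bij_betw_def by auto

locale gad =
  fixes e :: "'a::ab_group_add \<Rightarrow> nat" and gs :: "'a list"
  assumes inj_e: "inj e" and two: "2 \<le> length gs" and nz: "0 \<notin> set gs"
    and gen: "gspan (set gs) = UNIV" and fin: "finite (UNIV::'a set)"
begin

abbreviation K where "K \<equiv> length gs"
definition g where "g i = gs ! i"

definition code :: "nat \<Rightarrow> 'a \<Rightarrow> nat \<Rightarrow> nat \<Rightarrow> nat" where
  "code t h i j = to_nat (t, e h, i, j)"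

lemma code_eq[simp]: "code t h i j = code t' h' i' j' \<longleftrightarrow> t = t' \<and> h = h' \<and> i = i' \<and> j = j'"
  unfolding code_def by (simp add: inj_eq[OF inj_e])

abbreviation Tn :: "'a \<Rightarrow> nat \<Rightarrow> 'a vertex" where "Tn h i \<equiv> Inr (code 0 h i 0)"
abbreviation Sn :: "'a \<Rightarrow> nat \<Rightarrow> 'a vertex" where "Sn h i \<equiv> Inr (code 2 h i 0)"
abbreviation Ln :: "'a \<Rightarrow> nat \<Rightarrow> nat \<Rightarrow> 'a vertex" where "Ln h i j \<equiv> Inr (code 3 h i j)"

definition Aset :: "nat set" where
  "Aset = {code 0 h i 0 | h i. i < K} \<union> {code 2 h i 0 | h i. i < K} \<union> {code 3 h i j | h i j. i < K \<and> j \<le> i}"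

definition V :: "'a vertex set" where "V = var_vertices \<union> Inr ` Aset"

definition Eset :: "'a vertex set set" where
  "Eset = {{Inl h, Tn h i} | h i. i < K} \<union> {{Tn h i, Sn h i} | h i. i < K}
     \<union> {{Sn h i, Inl (h + g i)} | h i. i < K} \<union> {{Tn h i, Ln h i j} | h i j. i < K \<and> j \<le> i}"

lemma Vmem: "v \<in> V \<longleftrightarrow> (\<exists>h. v = Inl h) \<or> (\<exists>h i. i < K \<and> v = Tn h i) \<or> (\<exists>h i. i < K \<and> v = Sn h i)
   \<or> (\<exists>h i j. i < K \<and> j \<le> i \<and> v = Ln h i j)"
  unfolding V_def var_vertices_def Aset_def by auto

lemma adj_Inl: "{Inl h, v} \<in> Eset \<longleftrightarrow> (\<exists>i<K. v = Tn h i) \<or> (\<exists>i<K. v = Sn (h - g i) i)"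
  unfolding Eset_def by (auto simp: doubleton_eq_iff)

lemma adj_Tn: "{Tn h i, v} \<in> Eset \<longleftrightarrow> i < K \<and> (v = Inl h \<or> v = Sn h i \<or> (\<exists>j\<le>i. v = Ln h i j))"
  unfolding Eset_def by (auto simp: doubleton_eq_iff)

lemma adj_Sn: "{Sn h i, v} \<in> Eset \<longleftrightarrow> i < K \<and> (v = Tn h i \<or> v = Inl (h + g i))"
  unfolding Eset_def by (auto simp: doubleton_eq_iff)

lemma adj_Ln: "{Ln h i j, v} \<in> Eset \<longleftrightarrow> i < K \<and> j \<le> i \<and> v = Tn h i"
  unfolding Eset_def by (auto simp: doubleton_eq_iff)

end

context gad begin

lemma edge_in_V: "{u, v} \<in> Eset \<Longrightarrow> u \<in> V \<and> v \<in> V"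
  unfolding Eset_def Vmem by (auto simp: doubleton_eq_iff)

lemma nbr_eq: "nbr V Eset v = {u. {v, u} \<in> Eset}"
  unfolding nbr_def using edge_in_V by auto

abbreviation N where "N v \<equiv> nbr V Eset v"

lemma N_Sn: "i < K \<Longrightarrow> N (Sn h i) = {Tn h i, Inl (h + g i)}"
  unfolding nbr_eq adj_Sn by auto

lemma N_Ln: "i < K \<Longrightarrow> j \<le> i \<Longrightarrow> N (Ln h i j) = {Tn h i}"
  unfolding nbr_eq adj_Ln by auto

lemma N_Tn: "i < K \<Longrightarrow> N (Tn h i) = insert (Inl h) (insert (Sn h i) (Ln h i ` {..i}))"
  unfolding nbr_eq adj_Tn by auto

lemma N_Inl: "N (Inl h) = {v. (\<exists>i<K. v = Tn h i) \<or> (\<exists>i<K. v = Sn (h - g i) i)}"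
  unfolding nbr_eq adj_Inl by auto

lemma finite_Aset: "finite Aset"
proof -
  have "Aset \<subseteq> (\<lambda>(t,h,i,j). code t h i j) ` ({..<4} \<times> UNIV \<times> {..<K} \<times> {..<K})"
    unfolding Aset_def by force
  moreover have "finite ({..<4::nat} \<times> (UNIV::'a set) \<times> {..<K} \<times> {..<K})" using fin
    by (intro finite_cartesian_product) auto
  ultimately show ?thesis using finite_subset by blast
qed

lemma finite_V: "finite V"
  unfolding V_def var_vertices_def using fin finite_Aset by simp

lemma deg_Sn: "i < K \<Longrightarrow> card (N (Sn h i)) = 2"
  by (simp add: N_Sn)

lemma deg_Ln: "i < K \<Longrightarrow> j \<le> i \<Longrightarrow> card (N (Ln h i j)) = 1"
  by (simp add: N_Ln)

lemma deg_Tn: "i < K \<Longrightarrow> card (N (Tn h i)) = i + 3"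
proof -
  assume i: "i < K"
  have "card (Ln h i ` {..i}) = Suc i" by (subst card_image) (auto simp: inj_on_def)
  then show ?thesis using i by (simp add: N_Tn image_iff)
qed

lemma deg_Inl: "3 \<le> card (N (Inl h))"
proof -
  have "{Tn h 0, Tn h 1, Sn (h - g 0) 0} \<subseteq> N (Inl h)" using two unfolding N_Inl by force
  moreover have "finite (N (Inl h))" using finite_V unfolding nbr_def by simp
  ultimately have "card {Tn h 0, Tn h 1, Sn (h - g 0) 0} \<le> card (N (Inl h))" by (rule card_mono[rotated])
  then show ?thesis by simp
qed

definition hasleaf where "hasleaf v \<longleftrightarrow> (\<exists>u\<in>N v. card (N u) = 1)"

lemma hasleaf_Tn: "i < K \<Longrightarrow> hasleaf (Tn h i)"
  unfolding hasleaf_def using deg_Ln[of i 0 h] by (auto simp: N_Tn)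

lemma not_hasleaf_Inl: "\<not> hasleaf (Inl h)"
  unfolding hasleaf_def N_Inl using deg_Tn deg_Sn by fastforce

lemma not_hasleaf_Sn: "i < K \<Longrightarrow> \<not> hasleaf (Sn h i)"
  unfolding hasleaf_def using deg_Tn[of i h] deg_Inl[of "h + g i"] by (auto simp: N_Sn)

end

context gad begin

lemma hasleaf_aut:
  assumes f: "graph_automorphism V Eset f" and v: "v \<in> V"
  shows "hasleaf (f v) \<longleftrightarrow> hasleaf v"
proof -
  have "hasleaf (f v) \<longleftrightarrow> (\<exists>u\<in>N v. card (N (f u)) = 1)"
    unfolding hasleaf_def aut_nbr[OF f v, symmetric] by auto
  also have "\<dots> \<longleftrightarrow> hasleaf v"
    unfolding hasleaf_def using aut_deg[OF f] by (auto simp: nbr_def)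
  finally show ?thesis .
qed

lemma sound:
  assumes f: "graph_automorphism V Eset f"
  shows "\<exists>a. \<forall>b. f (Inl b) = Inl (a + b)"
proof -
  have inlV: "Inl h \<in> V" for h unfolding V_def var_vertices_def by auto
  have exc: "\<exists>c. f (Inl h) = Inl c" for h
  proof -
    have fv: "f (Inl h) \<in> V" by (rule aut_in[OF f inlV])
    have d: "3 \<le> card (N (f (Inl h)))" using aut_deg[OF f inlV] deg_Inl by simp
    have nl: "\<not> hasleaf (f (Inl h))" using hasleaf_aut[OF f inlV] not_hasleaf_Inl by simp
    from fv show ?thesis unfolding Vmem
    proof (elim disjE exE conjE)
      fix h' i assume "i < K" "f (Inl h) = Tn h' i" then show ?thesis using nl hasleaf_Tn[of i h'] by simp
    next
      fix h' i assume "i < K" "f (Inl h) = Sn h' i" then show ?thesis using d deg_Sn by simp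
    next
      fix h' i j assume "i < K" "j \<le> i" "f (Inl h) = Ln h' i j" then show ?thesis using d deg_Ln by simp
    qed blast
  qed
  have "\<forall>h. \<exists>c. f (Inl h) = Inl c" using exc by blast
  then obtain \<phi> where phi0: "\<forall>h. f (Inl h) = Inl (\<phi> h)" using choice[of "\<lambda>h c. f (Inl h) = Inl c"] by blast
  then have phi: "\<And>h. f (Inl h) = Inl (\<phi> h)" by blast
  have step: "\<phi> (h + g i) = \<phi> h + g i" if i: "i < K" for h i
  proof -
    have TV: "Tn h i \<in> V" using i unfolding Vmem by auto
    have SV: "Sn h i \<in> V" using i unfolding Vmem by auto
    have "Tn h i \<in> N (Inl h)" using i unfolding N_Inl by auto
    then have "f (Tn h i) \<in> N (Inl (\<phi> h))" using imageI[of _ _ f] aut_nbr[OF f inlV] phi by auto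
    then have c: "(\<exists>i'<K. f (Tn h i) = Tn (\<phi> h) i') \<or> (\<exists>i'<K. f (Tn h i) = Sn (\<phi> h - g i') i')"
      unfolding N_Inl by auto
    have hl: "hasleaf (f (Tn h i))" using hasleaf_aut[OF f TV] hasleaf_Tn[OF i] by simp
    have dg: "card (N (f (Tn h i))) = i + 3" using aut_deg[OF f TV] deg_Tn[OF i] by simp
    have fT: "f (Tn h i) = Tn (\<phi> h) i"
      using c
    proof (elim disjE exE conjE)
      fix i' assume "i' < K" "f (Tn h i) = Tn (\<phi> h) i'"
      then show ?thesis using dg deg_Tn[of i' "\<phi> h"] by simp
    next
      fix i' assume "i' < K" "f (Tn h i) = Sn (\<phi> h - g i') i'"
      then show ?thesis using hl not_hasleaf_Sn[of i' "\<phi> h - g i'"] by simp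
    qed
    have "Sn h i \<in> N (Tn h i)" using i by (simp add: N_Tn)
    then have "f (Sn h i) \<in> N (Tn (\<phi> h) i)" using imageI[of _ _ f] aut_nbr[OF f TV] fT by auto
    moreover have "card (N (f (Sn h i))) = 2" using aut_deg[OF f SV] deg_Sn[OF i] by simp
    ultimately have fS: "f (Sn h i) = Sn (\<phi> h) i"
    proof -
      assume m: "f (Sn h i) \<in> N (Tn (\<phi> h) i)" and c2: "card (N (f (Sn h i))) = 2"
      from m have "f (Sn h i) = Inl (\<phi> h) \<or> f (Sn h i) = Sn (\<phi> h) i \<or> (\<exists>j\<le>i. f (Sn h i) = Ln (\<phi> h) i j)"
        using i by (auto simp: N_Tn image_iff)
      then show ?thesis
      proof (elim disjE exE conjE)
        assume "f (Sn h i) = Inl (\<phi> h)" then show ?thesis using c2 deg_Inl[of "\<phi> h"] by simp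
      next
        fix j assume "j \<le> i" "f (Sn h i) = Ln (\<phi> h) i j" then show ?thesis using c2 deg_Ln[OF i] by simp
      qed
    qed
    have "Inl (h + g i) \<in> N (Sn h i)" using i by (simp add: N_Sn)
    then have "f (Inl (h + g i)) \<in> N (Sn (\<phi> h) i)" using imageI[of _ _ f] aut_nbr[OF f SV] fS by auto
    then show ?thesis using i phi by (simp add: N_Sn)
  qed
  have Phi: "x \<in> gspan (set gs) \<Longrightarrow> \<phi> x = \<phi> 0 + x" for x
  proof (induction rule: gspan.induct)
    case gz then show ?case by simp
  next
    case (ga x g')
    then obtain i where i: "i < K" "g' = g i" unfolding g_def by (auto simp: in_set_conv_nth)
    then show ?case using ga step by (simp add: add.assoc)
  next
    case (gd x g')
    then obtain i where i: "i < K" "g' = g i" unfolding g_def by (auto simp: in_set_conv_nth)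
    have "\<phi> x = \<phi> (x - g i) + g i" using step[OF i(1), of "x - g i"] by simp
    then show ?case using gd i by (simp add: algebra_simps)
  qed
  show ?thesis
  proof (intro exI allI)
    fix b
    have "\<phi> b = \<phi> 0 + b" using Phi[of b] gen by blast
    then show "f (Inl b) = Inl (\<phi> 0 + b)" using phi[of b] by simp
  qed
qed

end

context gad begin

definition shift :: "'a \<Rightarrow> 'a vertex \<Rightarrow> 'a vertex" where
  "shift a v = (case v of Inl b \<Rightarrow> Inl (a + b)
     | Inr m \<Rightarrow> Inr (case (from_nat m :: nat \<times> nat \<times> nat \<times> nat) of (t, x, i, j) \<Rightarrow> to_nat (t, e (a + inv e x), i, j)))"

lemma shift_Inl[simp]: "shift a (Inl b) = Inl (a + b)"
  by (simp add: shift_def)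

lemma shift_code[simp]: "shift a (Inr (code t h i j)) = Inr (code t (a + h) i j)"
  by (simp add: shift_def code_def inv_f_f[OF inj_e])

lemma shift_V: "v \<in> V \<Longrightarrow> shift a v \<in> V"
  unfolding Vmem by auto

lemma shift_inv: "v \<in> V \<Longrightarrow> shift (- a) (shift a v) = v"
  unfolding Vmem by auto

lemma shift_edge: "x \<in> Eset \<Longrightarrow> shift a ` x \<in> Eset"
  unfolding Eset_def by (auto simp flip: add.assoc)

lemma shift_aut: "graph_automorphism V Eset (shift a)"
  unfolding graph_automorphism_def
proof (intro conjI ballI)
  show "bij_betw (shift a) V V"
    by (rule bij_betw_byWitness[where f' = "shift (- a)"])
       (use shift_inv[of _ a] shift_inv[of _ "-a"] shift_V in auto)
  fix u v assume u: "u \<in> V" and v: "v \<in> V"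
  show "{u, v} \<in> Eset \<longleftrightarrow> {shift a u, shift a v} \<in> Eset"
  proof
    assume "{u, v} \<in> Eset"
    from shift_edge[OF this, of a] show "{shift a u, shift a v} \<in> Eset" by simp
  next
    assume "{shift a u, shift a v} \<in> Eset"
    from shift_edge[OF this, of "-a"] show "{u, v} \<in> Eset" using shift_inv u v by simp
  qed
qed

lemma simple: "simple_graph_on V Eset"
  unfolding simple_graph_on_def
proof
  fix x assume x: "x \<in> Eset"
  then obtain u v where "x = {u, v}" "u \<noteq> v"
    unfolding Eset_def using nz unfolding g_def by (auto simp: nth_mem)
  then show "\<exists>u v. x = {u, v} \<and> u \<noteq> v \<and> u \<in> V \<and> v \<in> V" using edge_in_V x by blast
qed

lemma gadget: "variable_gadget Aset Eset"
  unfolding variable_gadget_def Let_def V_def[symmetric]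
proof (intro conjI allI impI)
  fix a :: 'a
  show "\<exists>f. graph_automorphism V Eset f \<and> (\<forall>b. f (Inl b) = Inl (a + b))"
    using shift_aut[of a] by (intro exI[of _ "shift a"]) simp
qed (use finite_Aset simple sound in auto)

end

context gad begin

lemma g_nz: "i < K \<Longrightarrow> g i \<noteq> 0"
  using nz unfolding g_def by (metis nth_mem)

lemma no_tri:
  assumes xy: "{x, y} \<in> Eset" and yz: "{y, z} \<in> Eset" and xz: "{x, z} \<in> Eset"
    and d: "x \<noteq> y" "y \<noteq> z" "x \<noteq> z"
  shows False
proof -
  have xV: "x \<in> V" using edge_in_V xy by blast
  have zy: "{z, y} \<in> Eset"
    using yz by (simp add: insert_commute)
  from xV show False unfolding Vmem
  proof (elim disjE exE conjE)
    fix h assume x: "x = Inl h"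
    have y: "(\<exists>i<K. y = Tn h i) \<or> (\<exists>i<K. y = Sn (h - g i) i)" using xy x adj_Inl by simp
    have z: "(\<exists>i<K. z = Tn h i) \<or> (\<exists>i<K. z = Sn (h - g i) i)" using xz x adj_Inl by simp
    from y z show False
    proof (elim disjE exE conjE)
      fix i i' assume "i < K" "y = Tn h i" "i' < K" "z = Tn h i'"
      then show False using yz by (simp add: adj_Tn)
    next
      fix i i' assume "i < K" "y = Tn h i" "i' < K" "z = Sn (h - g i') i'"
      then show False using yz g_nz by (simp add: adj_Tn)
    next
      fix i i' assume "i < K" "y = Sn (h - g i) i" "i' < K" "z = Tn h i'"
      then show False using zy g_nz by (simp add: adj_Tn)
    next
      fix i i' assume "i < K" "y = Sn (h - g i) i" "i' < K" "z = Sn (h - g i') i'"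
      then show False using yz by (simp add: adj_Sn)
    qed
  next
    fix h i assume i: "i < K" and x: "x = Tn h i"
    have y: "y = Inl h \<or> y = Sn h i \<or> (\<exists>j\<le>i. y = Ln h i j)" using xy x adj_Tn by simp
    have z: "z = Inl h \<or> z = Sn h i \<or> (\<exists>j\<le>i. z = Ln h i j)" using xz x adj_Tn by simp
    from y z show False
    proof (elim disjE exE conjE)
      assume "y = Inl h" "z = Sn h i" then show False using zy g_nz[OF i] by (simp add: adj_Sn)
    next
      assume "z = Inl h" "y = Sn h i" then show False using yz g_nz[OF i] by (simp add: adj_Sn)
    qed (use d yz zy in \<open>simp_all add: adj_Ln adj_Inl adj_Sn\<close>)
  next
    fix h i assume i: "i < K" and x: "x = Sn h i"
    have y: "y = Tn h i \<or> y = Inl (h + g i)" using xy x adj_Sn by simp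
    have z: "z = Tn h i \<or> z = Inl (h + g i)" using xz x adj_Sn by simp
    from y z show False
    proof (elim disjE)
      assume "y = Tn h i" "z = Inl (h + g i)" then show False using yz g_nz[OF i] by (simp add: adj_Tn)
    next
      assume "z = Tn h i" "y = Inl (h + g i)" then show False using zy g_nz[OF i] by (simp add: adj_Tn)
    qed (use d in simp_all)
  next
    fix h i j assume "i < K" "j \<le> i" "x = Ln h i j"
    then show False using xy xz d by (simp add: adj_Ln)
  qed
qed

lemma clique_le: "is_clique V Eset C \<Longrightarrow> card C \<le> 2"
proof (rule ccontr)
  assume c: "is_clique V Eset C" and "\<not> card C \<le> 2"
  then have "3 \<le> card C" by simp
  then obtain B where "B \<subseteq> C" "card B = 3" using obtain_subset_with_card_n by metis
  then obtain x y z where "B = {x, y, z}" "x \<noteq> y" "y \<noteq> z" "x \<noteq> z" unfolding card_3_iff by auto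
  then have "x \<in> C" "y \<in> C" "z \<in> C" using \<open>B \<subseteq> C\<close> by auto
  then have "{x, y} \<in> Eset" "{y, z} \<in> Eset" "{x, z} \<in> Eset"
    using c \<open>x \<noteq> y\<close> \<open>y \<noteq> z\<close> \<open>x \<noteq> z\<close> unfolding is_clique_def by auto
  then show False using no_tri \<open>x \<noteq> y\<close> \<open>y \<noteq> z\<close> \<open>x \<noteq> z\<close> by blast
qed


end

context gad begin

lemma card_prod: "card ((UNIV::'a set) \<times> {..<K}) = card (UNIV::'a set) * K"
  by (simp add: card_cartesian_product)

lemma card_prod2: "card ((UNIV::'a set) \<times> {..<K} \<times> {..<K}) = card (UNIV::'a set) * (K * K)"
  by (simp add: card_cartesian_product)

lemma card_Un3: "finite A \<Longrightarrow> finite B \<Longrightarrow> finite C \<Longrightarrow> card (A \<union> B \<union> C) \<le> card A + card B + card C"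
  using card_Un_le[of "A \<union> B" C] card_Un_le[of A B] by linarith

lemma card_Un4: "card (A \<union> B \<union> C \<union> D) \<le> card A + card B + card C + card D"
  using card_Un_le[of "A \<union> B \<union> C" D] card_Un_le[of "A \<union> B" C] card_Un_le[of A B] by linarith

lemma card_Aset: "card Aset \<le> card (UNIV::'a set) * (2 * K + K * K)"
proof -
  define P where "P = (UNIV::'a set) \<times> {..<K}"
  define Q where "Q = (UNIV::'a set) \<times> {..<K} \<times> {..<K}"
  define f1 where "f1 = (\<lambda>(h,i). code 0 h i 0)"
  define f2 where "f2 = (\<lambda>(h,i). code 2 h i 0)"
  define f3 where "f3 = (\<lambda>(h,i,j). code 3 h i j)"
  have fP: "finite P" and fQ: "finite Q" using fin unfolding P_def Q_def by auto
  have sub: "Aset \<subseteq> f1 ` P \<union> f2 ` P \<union> f3 ` Q"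
  proof
    fix x assume "x \<in> Aset"
    then consider (a) h i where "i < K" "x = code 0 h i 0" | (b) h i where "i < K" "x = code 2 h i 0"
      | (c) h i j where "i < K" "j \<le> i" "x = code 3 h i j"
      unfolding Aset_def by blast
    then show "x \<in> f1 ` P \<union> f2 ` P \<union> f3 ` Q"
    proof cases
      case (a h i) then have "x = f1 (h, i)" "(h, i) \<in> P" unfolding f1_def P_def by auto
      then show ?thesis by blast
    next
      case (b h i) then have "x = f2 (h, i)" "(h, i) \<in> P" unfolding f2_def P_def by auto
      then show ?thesis by blast
    next
      case (c h i j) then have "x = f3 (h, i, j)" "(h, i, j) \<in> Q" unfolding f3_def Q_def by auto
      then show ?thesis by blast
    qed
  qed
  have "card Aset \<le> card (f1 ` P \<union> f2 ` P \<union> f3 ` Q)"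
    by (rule card_mono[OF _ sub]) (use fP fQ in simp)
  also have "\<dots> \<le> card (f1 ` P) + card (f2 ` P) + card (f3 ` Q)"
    by (rule card_Un3) (use fP fQ in simp_all)
  also have "\<dots> \<le> card P + card P + card Q"
    by (intro add_mono card_image_le fP fQ)
  finally show ?thesis unfolding P_def Q_def card_prod card_prod2 by (simp add: algebra_simps)
qed

lemma card_Eset: "card Eset \<le> card (UNIV::'a set) * (3 * K + K * K)"
proof -
  define P where "P = (UNIV::'a set) \<times> {..<K}"
  define Q where "Q = (UNIV::'a set) \<times> {..<K} \<times> {..<K}"
  define f1 where "f1 = (\<lambda>(h,i). {Inl h, Tn h i})"
  define f2 where "f2 = (\<lambda>(h,i). {Tn h i, Sn h i})"
  define f3 where "f3 = (\<lambda>(h,i). {Sn h i, Inl (h + g i)})"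
  define f4 where "f4 = (\<lambda>(h,i,j). {Tn h i, Ln h i j})"
  have fP: "finite P" and fQ: "finite Q" using fin unfolding P_def Q_def by auto
  have sub: "Eset \<subseteq> f1 ` P \<union> f2 ` P \<union> f3 ` P \<union> f4 ` Q"
  proof
    fix x assume "x \<in> Eset"
    then consider (a) h i where "i < K" "x = {Inl h, Tn h i}" | (b) h i where "i < K" "x = {Tn h i, Sn h i}"
      | (c) h i where "i < K" "x = {Sn h i, Inl (h + g i)}"
      | (d) h i j where "i < K" "j \<le> i" "x = {Tn h i, Ln h i j}"
      unfolding Eset_def by blast
    then show "x \<in> f1 ` P \<union> f2 ` P \<union> f3 ` P \<union> f4 ` Q"
    proof cases
      case (a h i) then have "x = f1 (h, i)" "(h, i) \<in> P" unfolding f1_def P_def by auto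
      then show ?thesis by blast
    next
      case (b h i) then have "x = f2 (h, i)" "(h, i) \<in> P" unfolding f2_def P_def by auto
      then show ?thesis by blast
    next
      case (c h i) then have "x = f3 (h, i)" "(h, i) \<in> P" unfolding f3_def P_def by auto
      then show ?thesis by blast
    next
      case (d h i j) then have "x = f4 (h, i, j)" "(h, i, j) \<in> Q" unfolding f4_def Q_def by auto
      then show ?thesis by blast
    qed
  qed
  have "card Eset \<le> card (f1 ` P \<union> f2 ` P \<union> f3 ` P \<union> f4 ` Q)"
    by (rule card_mono[OF _ sub]) (use fP fQ in simp)
  also have "\<dots> \<le> card (f1 ` P) + card (f2 ` P) + card (f3 ` P) + card (f4 ` Q)"
    by (rule card_Un4)
  also have "\<dots> \<le> card P + card P + card P + card Q"
    by (intro add_mono card_image_le fP fQ)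
  finally show ?thesis unfolding P_def Q_def card_prod card_prod2 by (simp add: algebra_simps)
qed

end


lemma log_facts:
  fixes n k :: nat
  assumes "2 ^ k \<le> n" "3 \<le> n"
  shows "real k \<le> log 2 (real n)" "3 \<le> 2 * log 2 (real n)"
proof -
  have n0: "0 < real n" using assms by simp
  have "(2::real) powr real k = 2 ^ k" by (simp add: powr_realpow)
  also have "\<dots> \<le> real n"
  proof -
    have "real (2 ^ k) \<le> real n" using assms(1) by (simp only: of_nat_le_iff)
    then show ?thesis by simp
  qed
  finally show "real k \<le> log 2 (real n)" using le_log_iff[of 2 "real n" "real k"] n0 by simp
  have "log 2 ((2::real) ^ 3) \<le> log 2 (real n ^ 2)"
  proof (subst log_le_cancel_iff)
    have "(3::real) \<le> real n" using assms(2) by simp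
    then have "(3::real) ^ 2 \<le> real n ^ 2" by (rule power_mono) simp
    then have "(9::real) \<le> real n ^ 2" by simp
    then show "2 ^ 3 \<le> real n ^ 2" by simp
  qed (use n0 in simp_all)
  moreover have l8: "log 2 (8::real) = 3" using log_pow_cancel[of "2::real" 3] by simp
  ultimately show "3 \<le> 2 * log 2 (real n)" by (simp add: log_nat_power)
qed



lemma budget:
  fixes n k :: nat
  assumes "2 ^ k \<le> n" "3 \<le> n" "1 \<le> k"
  shows "real (2 * (k + 1) + (k + 1) * (k + 1)) \<le> 4 * (log 2 (real n))^2"
    and "real (3 * (k + 1) + (k + 1) * (k + 1)) \<le> 7 * (log 2 (real n))^2"
proof -
  define L where "L = log 2 (real n)"
  have Lk: "real k \<le> L" and L3: "3 \<le> 2 * L" using log_facts[OF assms(1,2)] unfolding L_def by auto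
  have e1: "real (2 * (k + 1) + (k + 1) * (k + 1)) = real k * real k + 4 * real k + 3"
    by (simp add: algebra_simps)
  have e2: "real (3 * (k + 1) + (k + 1) * (k + 1)) = real k * real k + 5 * real k + 4"
    by (simp add: algebra_simps)
  have "real (2 * (k + 1) + (k + 1) * (k + 1)) \<le> 4 * L^2 \<and> real (3 * (k + 1) + (k + 1) * (k + 1)) \<le> 7 * L^2"
  proof (cases "k = 1")
    case True
    have "(3/2::real) ^ 2 \<le> L ^ 2" by (rule power_mono) (use L3 in auto)
    then have "9/4 \<le> L ^ 2" by (simp add: power_divide)
    then show ?thesis using True by simp
  next
    case False
    then have k2: "2 \<le> real k" using assms(3) by simp
    have "real k ^ 2 \<le> L ^ 2" by (rule power_mono[OF Lk]) simp
    then have a: "real k * real k \<le> L ^ 2" by (simp add: power2_eq_square)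
    have b: "2 * real k \<le> real k * real k" using k2 by (intro mult_right_mono) auto
    show ?thesis unfolding e1 e2 using a b k2 by linarith
  qed
  then show "real (2 * (k + 1) + (k + 1) * (k + 1)) \<le> 4 * (log 2 (real n))^2"
    and "real (3 * (k + 1) + (k + 1) * (k + 1)) \<le> 7 * (log 2 (real n))^2" unfolding L_def by auto
qed



lemma small_gadget:
  assumes n2: "card (UNIV::'a::{ab_group_add,finite} set) \<le> 2"
  shows "variable_gadget {} ({}::'a vertex set set)"
  unfolding variable_gadget_def Let_def
proof (intro conjI allI impI)
  let ?V = "var_vertices \<union> Inr ` {} :: 'a vertex set"
  have V: "?V = range Inl" unfolding var_vertices_def by simp
  show "finite ({}::nat set)" by simp
  show "simple_graph_on ?V {}" unfolding simple_graph_on_def by simp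
  fix a :: 'a
  let ?f = "\<lambda>v::'a vertex. case v of Inl b \<Rightarrow> Inl (a + b) | Inr m \<Rightarrow> Inr m"
  let ?g = "\<lambda>v::'a vertex. case v of Inl b \<Rightarrow> Inl (- a + b) | Inr m \<Rightarrow> Inr m"
  have "bij_betw ?f ?V ?V" unfolding V
    by (rule bij_betw_byWitness[where f' = ?g]) (auto simp: add.assoc[symmetric])
  then have "graph_automorphism ?V {} ?f" unfolding graph_automorphism_def by simp
  then show "\<exists>f. graph_automorphism ?V {} f \<and> (\<forall>b. f (Inl b) = Inl (a + b))"
    by (intro exI[of _ ?f]) simp
next
  fix f assume f: "graph_automorphism (var_vertices \<union> Inr ` {}) ({}::'a vertex set set) f"
  have b: "bij_betw f (range Inl) (range Inl)" using f unfolding graph_automorphism_def var_vertices_def by simp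
  have "\<forall>h. \<exists>c. f (Inl h) = Inl c" using b unfolding bij_betw_def by blast
  then obtain \<phi> where phi0: "\<forall>h. f (Inl h) = Inl (\<phi> h)" using choice[of "\<lambda>h c. f (Inl h) = Inl c"] by blast
  have inj: "\<phi> x = \<phi> y \<Longrightarrow> x = y" for x y
  proof -
    assume "\<phi> x = \<phi> y"
    then have "f (Inl x) = f (Inl y)" using phi0 by simp
    then show "x = y" using b unfolding bij_betw_def inj_on_def by blast
  qed
  have Phi: "\<phi> b = \<phi> 0 + b" for b
  proof (cases "b = 0")
    case True then show ?thesis by simp
  next
    case False
    have "card {0, b} = 2" using False by simp
    then have U: "UNIV = {0, b}"
      using n2 card_subset_eq[of "UNIV::'a set" "{0, b}"] card_mono[of "UNIV::'a set" "{0, b}"] by simp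
    have ne: "\<phi> b \<noteq> \<phi> 0" using inj[of b 0] False by blast
    have m1: "\<phi> b = 0 \<or> \<phi> b = b" and m2: "\<phi> 0 = 0 \<or> \<phi> 0 = b" and m3: "b + b = 0 \<or> b + b = b"
      using U by blast+
    show ?thesis
    proof (cases "\<phi> 0 = 0")
      case True then show ?thesis using ne m1 by simp
    next
      case F: False
      then have "\<phi> 0 = b" using m2 by blast
      moreover have "b + b = 0" using m3 False by simp
      moreover have "\<phi> b = 0" using ne m1 \<open>\<phi> 0 = b\<close> by simp
      ultimately show ?thesis by simp
    qed
  qed
  have "\<forall>b. f (Inl b) = Inl (\<phi> 0 + b)"
  proof
    fix b show "f (Inl b) = Inl (\<phi> 0 + b)" using phi0 Phi[of b] by simp
  qed
  then show "\<exists>a. \<forall>b. f (Inl b) = Inl (a + b)" by blast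
qed



theorem lemma7p1:
  shows "\<exists>(A :: nat set) (E :: ('a::{ab_group_add, finite}) vertex set set).
           variable_gadget A E \<and>
           real (card A) \<le> 4 * real (card (UNIV :: 'a set)) * (log 2 (real (card (UNIV :: 'a set))))^2 \<and>
           real (card E) \<le> 7 * real (card (UNIV :: 'a set)) * (log 2 (real (card (UNIV :: 'a set))))^2 \<and>
           (\<forall>C. is_clique (var_vertices \<union> Inr ` A) E C \<longrightarrow> card C \<le> min 4 (card (UNIV :: 'a set)))"
proof -
  define n where "n = card (UNIV :: 'a set)"
  define L where "L = log 2 (real n)"
  have fin: "finite (UNIV::'a set)" by simp
  have n1: "1 \<le> n" unfolding n_def using fin by (simp add: Suc_leI card_gt_0_iff)
  have L2: "0 \<le> L^2" by simp
  show ?thesis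
  proof (cases "n \<le> 2")
    case True
    have cl: "card C \<le> min 4 n" if c: "is_clique (var_vertices \<union> Inr ` {}) ({}::'a vertex set set) C" for C
    proof -
      have sub: "C \<subseteq> range Inl" using c unfolding is_clique_def var_vertices_def by simp
      then have fC: "finite C" using finite_subset fin by blast
      have "\<forall>x\<in>C. \<forall>y\<in>C. x = y" using c unfolding is_clique_def by blast
      then have "card C \<le> Suc 0" using card_le_Suc0_iff_eq[OF fC] by blast
      then show ?thesis using n1 by simp
    qed
    have g: "variable_gadget {} ({}::'a vertex set set)" using small_gadget True unfolding n_def by blast
    have "0 \<le> 4 * real n * L^2" "0 \<le> 7 * real n * L^2" using L2 by simp_all
    then show ?thesis using g cl by (intro exI[of _ "{}"] exI[of _ "{}::'a vertex set set"]) (simp add: n_def L_def)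
  next
    case False
    then have n3: "3 \<le> n" by simp
    obtain gs0 :: "'a list" where g0: "gspan (set gs0) = UNIV" "2 ^ length gs0 \<le> card (UNIV::'a set)" "0 \<notin> set gs0"
      using gen_exists[OF fin] by blast
    have ne: "gs0 \<noteq> []"
    proof
      assume "gs0 = []"
      then have "gspan (set gs0) = {0}" using gspan_empty by simp
      then have U0: "(UNIV::'a set) = {0}" using g0(1) by simp
      have "n = 1" using arg_cong[OF U0, of card] unfolding n_def by simp
      then show False using n3 by simp
    qed
    define gs where "gs = hd gs0 # gs0"
    have sgs: "set gs = set gs0" unfolding gs_def using ne by auto
    obtain f :: "'a \<Rightarrow> nat" and m where "f ` UNIV = {i. i < m}" "inj_on f UNIV"
      using finite_imp_inj_to_nat_seg[OF fin] by blast
    then have ie: "inj f" by simp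
    interpret G: gad f gs
      by unfold_locales (use ie sgs g0 ne in \<open>auto simp: gs_def Suc_le_eq\<close>)
    define k where "k = length gs0"
    have k1: "1 \<le> k" unfolding k_def using ne by (cases gs0) auto
    have K: "length gs = k + 1" unfolding gs_def k_def by simp
    have pk: "2 ^ k \<le> n" unfolding k_def n_def using g0(2) .
    note B = budget[OF pk n3 k1, folded L_def]
    have cA: "real (card G.Aset) \<le> 4 * real n * L^2"
    proof -
      have "card G.Aset \<le> n * (2 * (k + 1) + (k + 1) * (k + 1))" using G.card_Aset K unfolding n_def by simp
      then have "real (card G.Aset) \<le> real n * real (2 * (k + 1) + (k + 1) * (k + 1))"
        by (metis of_nat_le_iff of_nat_mult)
      also have "\<dots> \<le> real n * (4 * L^2)" using B(1) by (intro mult_left_mono) simp_all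
      finally show ?thesis by simp
    qed
    have cE: "real (card G.Eset) \<le> 7 * real n * L^2"
    proof -
      have "card G.Eset \<le> n * (3 * (k + 1) + (k + 1) * (k + 1))" using G.card_Eset K unfolding n_def by simp
      then have "real (card G.Eset) \<le> real n * real (3 * (k + 1) + (k + 1) * (k + 1))"
        by (metis of_nat_le_iff of_nat_mult)
      also have "\<dots> \<le> real n * (7 * L^2)" using B(2) by (intro mult_left_mono) simp_all
      finally show ?thesis by simp
    qed
    have cl: "card C \<le> min 4 n" if "is_clique (var_vertices \<union> Inr ` G.Aset) G.Eset C" for C
      using G.clique_le[of C] that n3 unfolding G.V_def by simp
    show ?thesis using G.gadget cA cE cl unfolding n_def L_def by blast
  qed
qed


end
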